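(* Let $G_R=(V,E_R)$ and $G_M=(V,E_M)$ be two strongly connected directed graphs on the same vertex set $V$, $|V|=n$, with weight matrices $W_R=[w^R_{ij}]$ and $W_M=[w^M_{ij}]$. Suppose that (1) $\sum_{j\neq i}w^R_{ji}=\sum_{j\ne i}w^M_{ji}=1$ for all $i\in V$ (i.e. $W_R$ and $W_M$ are doubly stochastic), and (2) for every pair of nodes $i,j\in V$: $w^R_{ij}+w^R_{ji}=w^M_{ij}+w^M_{ji}$. Then for every $r>0$ the two-graph Moran process with resident graph $G_R$ and mutant graph $G_M$ has the Moran fixation probability, i.e. $f_{G_R,G_M}(r)=f_{\mathrm{Moran}}(r)$.
   Context: Two-graph Moran process: the vertex set is $V=\{1,\dots,n\}$; there is a resident graph $G_R=(V,E_R)$ and a mutant graph $G_M=(V,E_M)$, each strongly connected, with weight matrices $W_R=[w^R_{ij}]$ and $W_M=[w^M_{ij}]$ that are row-stochastic ($\sum_j w^R_{ij}=\sum_j w^M_{ij}=1$ for every $i$), where $w^R_{ij}>0$ iff $(i,j)\in E_R$ and $w^M_{ij}>0$ iff $(i,j)\in E_M$. The state is the mutant set $S\subseteq V$. Residents have fitness $1$ and mutants fitness $r>0$. In each step a vertex $i$ is chosen with probability proportional to its fitness (total fitness $F(S)=r|S|+n-|S|$); if $i$ is a mutant it picks $j$ with probability $w^M_{ij}$ and $j$ becomes a mutant, and if $i$ is a resident it picks $j$ with probability $w^R_{ij}$ and $j$ becomes a resident. Absorption occurs at $S=\emptyset$ (extinction) or $S=V$ (fixation). With $f(S)$ the fixation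 probability from $S$, the fixation probability is $f_{G_R,G_M}(r)=\frac1n\sum_{u\in V}f(\{u\})$. The Moran fixation probability is $f_{\mathrm{Moran}}(r)=\frac{1-1/r}{1-1/r^n}$ for $r\neq1$ (and $1/n$ for $r=1$), the fixation probability when both graphs are the complete graph. *)

theory Defs
  imports Complex_Main
begin

text \<open>Vertex set: a finite type 'v (so V = UNIV and n = CARD('v)).\<close>

definition edges_of :: "('v \<Rightarrow> 'v \<Rightarrow> real) \<Rightarrow> ('v \<times> 'v) set" where
  "edges_of W = {(i, j). W i j > 0}"

definition weighted_sc_graph :: "('v::finite \<Rightarrow> 'v \<Rightarrow> real) \<Rightarrow> bool" where
  "weighted_sc_graph W \<longleftrightarrow>
     (\<forall>i j. W i j \<ge> 0) \<and> (\<forall>i. (\<Sum>j\<in>UNIV. W i j) = 1) \<and>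
     (\<forall>i j. (i, j) \<in> (edges_of W)\<^sup>*)"

definition total_fitness :: "real \<Rightarrow> 'v::finite set \<Rightarrow> real" where
  "total_fitness r S = r * real (card S) + real (card (UNIV :: 'v set)) - real (card S)"

definition moran_step ::
  "('v::finite \<Rightarrow> 'v \<Rightarrow> real) \<Rightarrow> ('v \<Rightarrow> 'v \<Rightarrow> real) \<Rightarrow> real \<Rightarrow> 'v set \<Rightarrow> 'v set \<Rightarrow> real" where
  "moran_step WR WM r S T =
     (\<Sum>i\<in>UNIV. \<Sum>j\<in>UNIV.
        (if i \<in> S then r * WM i j else WR i j) / total_fitness r S *
        (if (if i \<in> S then insert j S else S - {j}) = T then 1 else 0))"

fun moran_steps ::
  "('v::finite \<Rightarrow> 'v \<Rightarrow> real) \<Rightarrow> ('v \<Rightarrow> 'v \<Rightarrow> real) \<Rightarrow> real \<Rightarrow> nat \<Rightarrow> 'v set \<Rightarrow> 'v set \<Rightarrow> real" where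
  "moran_steps WR WM r 0 S T = (if S = T then 1 else 0)"
| "moran_steps WR WM r (Suc t) S T =
     (\<Sum>U\<in>UNIV. moran_step WR WM r S U * moran_steps WR WM r t U T)"

text \<open>Fixation probability f(S) from state S: since V is absorbing,
  moran_steps t S V is the probability of having fixated by time t; f(S) is its limit.\<close>
definition fixation_from ::
  "('v::finite \<Rightarrow> 'v \<Rightarrow> real) \<Rightarrow> ('v \<Rightarrow> 'v \<Rightarrow> real) \<Rightarrow> real \<Rightarrow> 'v set \<Rightarrow> real" where
  "fixation_from WR WM r S = lim (\<lambda>t. moran_steps WR WM r t S UNIV)"

definition fixation_prob ::
  "('v::finite \<Rightarrow> 'v \<Rightarrow> real) \<Rightarrow> ('v \<Rightarrow> 'v \<Rightarrow> real) \<Rightarrow> real \<Rightarrow> real" where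
  "fixation_prob WR WM r = (\<Sum>u\<in>UNIV. fixation_from WR WM r {u}) / real (card (UNIV :: 'v set))"

definition f_Moran :: "nat \<Rightarrow> real \<Rightarrow> real" where
  "f_Moran n r = (if r = 1 then 1 / real n else (1 - 1 / r) / (1 - 1 / r ^ n))"

end

theory Submission imports Defs begin

lemma sum_split_univ:
  fixes f :: "'v::finite \<Rightarrow> real"
  shows "(\<Sum>i\<in>UNIV. f i) = (\<Sum>i\<in>S. f i) + (\<Sum>i\<in>UNIV - S. f i)"
  by (metis add.commute finite sum.subset_diff top_greatest)

lemma diag_zero:
  fixes W :: "'v::finite \<Rightarrow> 'v \<Rightarrow> real"
  assumes nn: "\<forall>i j. W i j \<ge> 0" and row: "\<forall>i. (\<Sum>j\<in>UNIV. W i j) = 1"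
    and col: "\<forall>i. (\<Sum>j\<in>UNIV - {i}. W j i) = 1"
  shows "W i i = 0"
proof -
  have a: "(\<Sum>i\<in>UNIV. \<Sum>j\<in>UNIV. W i j) = real (card (UNIV::'v set))" using row by simp
  have b: "(\<Sum>i\<in>UNIV. \<Sum>j\<in>UNIV. W j i) = (\<Sum>i\<in>UNIV. W i i + (\<Sum>j\<in>UNIV - {i}. W j i))"
    by (rule sum.cong[OF refl], rule sum.remove) auto
  also have "\<dots> = (\<Sum>i\<in>UNIV. W i i) + real (card (UNIV::'v set))"
    using col by (simp add: sum.distrib)
  finally have "(\<Sum>i\<in>UNIV. W i i) = 0" using a sum.swap[of "\<lambda>i j. W i j" UNIV UNIV] by simp
  then show ?thesis using nn by (simp add: sum_nonneg_eq_0_iff)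
qed

lemma col_sum:
  fixes W :: "'v::finite \<Rightarrow> 'v \<Rightarrow> real"
  assumes nn: "\<forall>i j. W i j \<ge> 0" and row: "\<forall>i. (\<Sum>j\<in>UNIV. W i j) = 1"
    and col: "\<forall>i. (\<Sum>j\<in>UNIV - {i}. W j i) = 1"
  shows "(\<Sum>j\<in>UNIV. W j i) = 1"
proof -
  have "(\<Sum>j\<in>UNIV. W j i) = W i i + (\<Sum>j\<in>UNIV - {i}. W j i)" by (simp add: sum.remove)
  then show ?thesis using diag_zero[OF assms] col by simp
qed

lemma cut_balance:
  fixes W :: "'v::finite \<Rightarrow> 'v \<Rightarrow> real"
  assumes row: "\<forall>i. (\<Sum>j\<in>UNIV. W i j) = 1" and colf: "\<forall>i. (\<Sum>j\<in>UNIV. W j i) = 1"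
  shows "(\<Sum>i\<in>S. \<Sum>j\<in>UNIV - S. W i j) = (\<Sum>i\<in>UNIV - S. \<Sum>j\<in>S. W i j)"
proof -
  have "(\<Sum>i\<in>S. \<Sum>j\<in>UNIV. W i j) = real (card S)" using row by simp
  moreover have "(\<Sum>j\<in>S. \<Sum>i\<in>UNIV. W i j) = real (card S)" using colf by simp
  moreover have "(\<Sum>j\<in>S. \<Sum>i\<in>UNIV. W i j) = (\<Sum>i\<in>UNIV. \<Sum>j\<in>S. W i j)" by (rule sum.swap)
  moreover have "(\<Sum>i\<in>S. \<Sum>j\<in>UNIV. W i j) = (\<Sum>i\<in>S. \<Sum>j\<in>S. W i j) + (\<Sum>i\<in>S. \<Sum>j\<in>UNIV - S. W i j)"
    by (simp add: sum_split_univ[of _ S] sum.distrib)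
  moreover have "(\<Sum>i\<in>UNIV. \<Sum>j\<in>S. W i j) = (\<Sum>i\<in>S. \<Sum>j\<in>S. W i j) + (\<Sum>i\<in>UNIV - S. \<Sum>j\<in>S. W i j)"
    by (rule sum_split_univ)
  ultimately show ?thesis by linarith
qed

lemma cut_mixed:
  fixes WR WM :: "'v::finite \<Rightarrow> 'v \<Rightarrow> real"
  assumes bR: "(\<Sum>i\<in>S. \<Sum>j\<in>UNIV - S. WR i j) = (\<Sum>i\<in>UNIV - S. \<Sum>j\<in>S. WR i j)"
    and bM: "(\<Sum>i\<in>S. \<Sum>j\<in>UNIV - S. WM i j) = (\<Sum>i\<in>UNIV - S. \<Sum>j\<in>S. WM i j)"
    and sym: "\<forall>i j. WR i j + WR j i = WM i j + WM j i"
  shows "(\<Sum>i\<in>S. \<Sum>j\<in>UNIV - S. WM i j) = (\<Sum>i\<in>UNIV - S. \<Sum>j\<in>S. WR i j)"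
proof -
  have "(\<Sum>i\<in>S. \<Sum>j\<in>UNIV - S. WR i j + WR j i) = (\<Sum>i\<in>S. \<Sum>j\<in>UNIV - S. WM i j + WM j i)"
    using sym by simp
  moreover have gen: "\<And>W::'v\<Rightarrow>'v\<Rightarrow>real. (\<Sum>i\<in>S. \<Sum>j\<in>UNIV - S. W i j + W j i) =
      (\<Sum>i\<in>S. \<Sum>j\<in>UNIV - S. W i j) + (\<Sum>i\<in>UNIV - S. \<Sum>j\<in>S. W i j)"
  proof -
    fix W :: "'v\<Rightarrow>'v\<Rightarrow>real"
    have "(\<Sum>i\<in>S. \<Sum>j\<in>UNIV - S. W i j + W j i) = (\<Sum>i\<in>S. \<Sum>j\<in>UNIV - S. W i j) + (\<Sum>i\<in>S. \<Sum>j\<in>UNIV - S. W j i)"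
      by (simp add: sum.distrib)
    moreover have "(\<Sum>i\<in>S. \<Sum>j\<in>UNIV - S. W j i) = (\<Sum>j\<in>UNIV - S. \<Sum>i\<in>S. W j i)" by (rule sum.swap)
    ultimately show "(\<Sum>i\<in>S. \<Sum>j\<in>UNIV - S. W i j + W j i) =
      (\<Sum>i\<in>S. \<Sum>j\<in>UNIV - S. W i j) + (\<Sum>i\<in>UNIV - S. \<Sum>j\<in>S. W i j)" by simp
  qed
  ultimately show ?thesis using bR bM gen[of WR] gen[of WM] by linarith
qed

lemma conn_cut:
  fixes W :: "'v \<Rightarrow> 'v \<Rightarrow> real"
  assumes "(s, t) \<in> (edges_of W)\<^sup>*" "s \<in> S" "t \<notin> S"
  shows "\<exists>i\<in>S. \<exists>j. j \<notin> S \<and> W i j > 0"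
  using assms
proof (induction rule: rtrancl_induct)
  case base then show ?case by simp
next
  case (step y z)
  then show ?case by (cases "y \<in> S") (auto simp: edges_of_def)
qed


definition coef :: "('v \<Rightarrow> 'v \<Rightarrow> real) \<Rightarrow> ('v \<Rightarrow> 'v \<Rightarrow> real) \<Rightarrow> real \<Rightarrow> 'v::finite set \<Rightarrow> 'v \<Rightarrow> 'v \<Rightarrow> real" where
  "coef WR WM r S i j = (if i \<in> S then r * WM i j else WR i j) / total_fitness r S"

definition tgt :: "'v set \<Rightarrow> 'v \<Rightarrow> 'v \<Rightarrow> 'v set" where
  "tgt S i j = (if i \<in> S then insert j S else S - {j})"

lemma step_sum:
  fixes f :: "'v::finite set \<Rightarrow> real"
  shows "(\<Sum>U\<in>UNIV. moran_step WR WM r S U * f U) = (\<Sum>i\<in>UNIV. \<Sum>j\<in>UNIV. coef WR WM r S i j * f (tgt S i j))"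
proof -
  have "(\<Sum>U\<in>UNIV. moran_step WR WM r S U * f U) =
     (\<Sum>U\<in>UNIV. \<Sum>i\<in>UNIV. \<Sum>j\<in>UNIV. (if tgt S i j = U then coef WR WM r S i j * f U else 0))"
  proof -
    have "(\<Sum>U\<in>UNIV. moran_step WR WM r S U * f U) =
     (\<Sum>U\<in>UNIV. \<Sum>i\<in>UNIV. \<Sum>j\<in>UNIV. coef WR WM r S i j * (if tgt S i j = U then 1 else 0) * f U)"
      unfolding moran_step_def coef_def tgt_def by (simp only: sum_distrib_right)
    also have "\<dots> = (\<Sum>U\<in>UNIV. \<Sum>i\<in>UNIV. \<Sum>j\<in>UNIV. (if tgt S i j = U then coef WR WM r S i j * f U else 0))"
      by (intro sum.cong refl) simp
    finally show ?thesis .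
  qed
  also have "\<dots> = (\<Sum>i\<in>UNIV. \<Sum>j\<in>UNIV. \<Sum>U\<in>UNIV. (if tgt S i j = U then coef WR WM r S i j * f U else 0))"
    by (subst sum.swap) (rule sum.cong[OF refl], rule sum.swap)
  also have "\<dots> = (\<Sum>i\<in>UNIV. \<Sum>j\<in>UNIV. coef WR WM r S i j * f (tgt S i j))"
    by simp
  finally show ?thesis .
qed

lemma steps_sum:
  fixes f :: "'v::finite set \<Rightarrow> real"
  shows "(\<Sum>T\<in>UNIV. moran_steps WR WM r (Suc t) S T * f T) =
    (\<Sum>U\<in>UNIV. moran_step WR WM r S U * (\<Sum>T\<in>UNIV. moran_steps WR WM r t U T * f T))"
proof -
  have "(\<Sum>T\<in>UNIV. moran_steps WR WM r (Suc t) S T * f T) =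
    (\<Sum>T\<in>UNIV. \<Sum>U\<in>UNIV. moran_step WR WM r S U * (moran_steps WR WM r t U T * f T))"
    by (simp add: sum_distrib_right mult.assoc)
  also have "\<dots> = (\<Sum>U\<in>UNIV. \<Sum>T\<in>UNIV. moran_step WR WM r S U * (moran_steps WR WM r t U T * f T))"
    by (rule sum.swap)
  also have "\<dots> = (\<Sum>U\<in>UNIV. moran_step WR WM r S U * (\<Sum>T\<in>UNIV. moran_steps WR WM r t U T * f T))"
    by (simp add: sum_distrib_left)
  finally show ?thesis .
qed

lemma steps0_sum:
  fixes f :: "'v::finite set \<Rightarrow> real"
  shows "(\<Sum>T\<in>UNIV. moran_steps WR WM r 0 S T * f T) = f S"
proof -
  have "\<And>T. moran_steps WR WM r 0 S T * f T = (if S = T then f T else 0)" by simp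
  then show ?thesis by simp
qed


locale tg =
  fixes WR WM :: "'v::finite \<Rightarrow> 'v \<Rightarrow> real" and r :: real
  assumes nnR: "\<And>i j. WR i j \<ge> 0" and nnM: "\<And>i j. WM i j \<ge> 0"
    and rowR: "\<And>i. (\<Sum>j\<in>UNIV. WR i j) = 1" and rowM: "\<And>i. (\<Sum>j\<in>UNIV. WM i j) = 1"
    and cut: "\<And>S. (\<Sum>i\<in>S. \<Sum>j\<in>UNIV - S. WM i j) = (\<Sum>i\<in>UNIV - S. \<Sum>j\<in>S. WR i j)"
    and conn: "\<And>S. S \<noteq> {} \<Longrightarrow> S \<noteq> UNIV \<Longrightarrow> \<exists>i\<in>S. \<exists>j. j \<notin> S \<and> WM i j > 0"
    and rpos: "r > 0"
    and n2: "card (UNIV::'v set) \<ge> 2"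
begin

abbreviation "P \<equiv> moran_step WR WM r"
abbreviation "Pt \<equiv> moran_steps WR WM r"
abbreviation "c \<equiv> coef WR WM r"

lemma card_le: "card (S::'v set) \<le> card (UNIV::'v set)"
  by (simp add: card_mono)

lemma Fpos: "total_fitness r (S::'v set) > 0"
proof -
  have "real (card S) \<le> real (card (UNIV::'v set))" using card_le by simp
  moreover have "r * real (card S) \<ge> 0" using rpos by simp
  moreover have "card S > 0 \<Longrightarrow> r * real (card S) > 0" using rpos by simp
  moreover have "real (card (UNIV::'v set)) \<ge> 2" using n2 by simp
  ultimately show ?thesis unfolding total_fitness_def
    by (cases "card S = 0") auto
qed

lemma coef_nn: "c S i j \<ge> 0"
  unfolding coef_def using Fpos[of S] nnR nnM rpos by simp

lemma coef_sum: "(\<Sum>i\<in>UNIV. \<Sum>j\<in>UNIV. c S i j) = 1"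
proof -
  have "\<And>i. (\<Sum>j\<in>UNIV. c S i j) = (if i \<in> S then r else 1) / total_fitness r S"
  proof -
    fix i
    have "(\<Sum>j\<in>UNIV. c S i j) = (\<Sum>j\<in>UNIV. (if i \<in> S then r * WM i j else WR i j)) / total_fitness r S"
      unfolding coef_def by (simp only: sum_divide_distrib)
    moreover have "(\<Sum>j\<in>UNIV. (if i \<in> S then r * WM i j else WR i j)) = (if i \<in> S then r else 1)"
      by (cases "i \<in> S") (simp_all add: rowR rowM flip: sum_distrib_left)
    ultimately show "(\<Sum>j\<in>UNIV. c S i j) = (if i \<in> S then r else 1) / total_fitness r S" by simp
  qed
  then have "(\<Sum>i\<in>UNIV. \<Sum>j\<in>UNIV. c S i j) = (\<Sum>i\<in>UNIV. (if i \<in> S then r else 1)) / total_fitness r S"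
    by (simp add: sum_divide_distrib)
  also have "(\<Sum>i\<in>UNIV. (if i \<in> S then r else 1)) = (\<Sum>i\<in>S. (if i \<in> S then r else 1)) + (\<Sum>i\<in>UNIV - S. (if i \<in> S then r else 1))"
    by (rule sum_split_univ)
  also have "\<dots> = r * real (card S) + real (card (UNIV - S))" by simp
  also have "\<dots> = total_fitness r S"
    unfolding total_fitness_def by (simp add: card_Diff_subset of_nat_diff card_le)
  finally show ?thesis using Fpos[of S] by (metis divide_self less_irrefl)
qed

lemma P_nn: "P S U \<ge> 0"
  unfolding moran_step_def using Fpos[of S] nnR nnM rpos
  by (intro sum_nonneg mult_nonneg_nonneg divide_nonneg_pos) (auto intro: mult_nonneg_nonneg)

lemma Pt_nn: "Pt t S U \<ge> 0"
  by (induction t arbitrary: S) (simp_all add: sum_nonneg mult_nonneg_nonneg P_nn)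

lemma P_sum: "(\<Sum>U\<in>UNIV. P S U) = 1"
  using step_sum[of WR WM r S "\<lambda>_. 1"] coef_sum by simp

end

lemma sum_if_notin:
  fixes A :: "'v::finite \<Rightarrow> real"
  shows "(\<Sum>j\<in>UNIV. if j \<notin> S then A j else 0) = (\<Sum>j\<in>UNIV - S. A j)"
proof -
  have "{j. j \<notin> S} = UNIV - S" by auto
  then show ?thesis by (simp add: sum.If_cases)
qed

lemma sum_if_in:
  fixes A :: "'v::finite \<Rightarrow> real"
  shows "(\<Sum>j\<in>UNIV. if j \<in> S then A j else 0) = (\<Sum>j\<in>S. A j)"
  by (simp add: sum.If_cases)

definition hh :: "real \<Rightarrow> nat \<Rightarrow> nat \<Rightarrow> real" where
  "hh r N k = (if r = 1 then real k / real N else (1 - (1/r)^k) / (1 - (1/r)^N))"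

lemma pow_ne1:
  fixes a :: real
  assumes "a > 0" "a \<noteq> 1" "N > 0"
  shows "a ^ N \<noteq> 1"
proof (cases "a < 1")
  case True
  then have "a ^ N < 1" using assms by (simp add: power_less_one_iff)
  then show ?thesis by simp
next
  case False
  then have "a > 1" using assms by simp
  then have "a ^ N > 1" using assms by (simp add: one_less_power)
  then show ?thesis by simp
qed

lemma hh_rec:
  assumes "r > 0" "N > 0"
  shows "r * (hh r N (Suc (Suc m)) - hh r N (Suc m)) = hh r N (Suc m) - hh r N m"
proof (cases "r = 1")
  case True then show ?thesis by (simp add: hh_def diff_divide_distrib[symmetric])
next
  case False
  have D: "1 - (1/r)^N \<noteq> 0" using pow_ne1[of "1/r" N] assms False by simp
  have "r * (1/r)^(Suc m) = (1/r)^m" using assms by simp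
  then have "r * ((1 - (1/r)^(Suc (Suc m))) - (1 - (1/r)^(Suc m))) = (1 - (1/r)^(Suc m)) - (1 - (1/r)^m)"
    by (simp add: algebra_simps)
  then show ?thesis using False D unfolding hh_def
    by (simp add: diff_divide_distrib[symmetric])
qed

lemma hh_inc:
  assumes "r > 0" "N > 0"
  shows "hh r N (Suc k) - hh r N k \<noteq> 0"
proof (cases "r = 1")
  case True then show ?thesis using assms by (simp add: hh_def diff_divide_distrib[symmetric])
next
  case False
  have D: "1 - (1/r)^N \<noteq> 0" using pow_ne1[of "1/r" N] assms False by simp
  have x: "(1/r)^k > 0" using assms by simp
  have "(1/r)^k / r \<noteq> (1/r)^k"
  proof
    assume "(1/r)^k / r = (1/r)^k"
    then have "(1/r)^k = (1/r)^k * r" using assms by (simp add: field_simps)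
    then have "(1/r)^k * 1 = (1/r)^k * r" by simp
    then have "r = 1" using x by (metis mult_left_cancel less_irrefl)
    then show False using False by simp
  qed
  then have "(1/r)^(Suc k) \<noteq> (1/r)^k" by simp
  then show ?thesis using False D unfolding hh_def
    by (simp add: diff_divide_distrib[symmetric])
qed

lemma hh_0: "hh r N 0 = 0" by (simp add: hh_def)

lemma hh_N: assumes "r > 0" "N > 0" shows "hh r N N = 1"
  using pow_ne1[of "1/r" N] assms by (simp add: hh_def)

lemma hh_bounds:
  assumes "r > 0" "N > 0" "k \<le> N"
  shows "0 \<le> hh r N k \<and> hh r N k \<le> 1"
proof (cases "r = 1")
  case True then show ?thesis using assms by (simp add: hh_def)
next
  case False
  define a where "a = 1/r"
  have a0: "a > 0" using assms a_def by simp
  have a1: "a \<noteq> 1" using False a_def by auto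
  show ?thesis
  proof (cases "a < 1")
    case True
    have "a ^ N \<le> a ^ k" using True a0 assms(3) by (simp add: power_decreasing)
    moreover have "a ^ k \<le> 1" using True a0 by (simp add: power_le_one)
    moreover have "a ^ N < 1" using True a0 assms by (simp add: power_less_one_iff)
    ultimately show ?thesis using False unfolding hh_def a_def[symmetric] by simp
  next
    case False
    then have "a > 1" using a1 by simp
    then have "a ^ k \<le> a ^ N" "1 \<le> a ^ k" "1 < a ^ N" using assms
      by (simp_all add: power_increasing one_less_power)
    then show ?thesis using \<open>r \<noteq> 1\<close> unfolding hh_def a_def[symmetric]
      by (simp add: divide_nonpos_neg divide_le_eq_1)
  qed
qed

lemma hh_1: assumes "r > 0" "N > 0" shows "hh r N 1 = f_Moran N r"
  using assms by (simp add: hh_def f_Moran_def power_one_over)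


context tg
begin

lemma Npos: "card (UNIV::'v set) > 0" using n2 by simp

definition phi :: "'v set \<Rightarrow> real" where
  "phi S = hh r (card (UNIV::'v set)) (card S)"

lemma dev_sum:
  "(\<Sum>U\<in>UNIV. P S U * f U) - f S = (\<Sum>i\<in>UNIV. \<Sum>j\<in>UNIV. c S i j * (f (tgt S i j) - f S))"
proof -
  have "(\<Sum>i\<in>UNIV. \<Sum>j\<in>UNIV. c S i j * (f (tgt S i j) - f S)) =
     (\<Sum>i\<in>UNIV. \<Sum>j\<in>UNIV. c S i j * f (tgt S i j)) - (\<Sum>i\<in>UNIV. \<Sum>j\<in>UNIV. c S i j) * f S"
    by (simp add: algebra_simps sum_subtractf sum_distrib_right sum_distrib_left)
  then show ?thesis using step_sum[of WR WM r S f] coef_sum[of S] by simp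
qed

lemma harmonic: "(\<Sum>U\<in>UNIV. P S U * phi U) = phi S"
proof -
  define k where "k = card S"
  define N where "N = card (UNIV::'v set)"
  define F where "F = total_fitness r S"
  define A where "A = (\<lambda>i j. WM i j * (r * (hh r N (Suc k) - hh r N k) / F))"
  define B where "B = (\<lambda>i j. WR i j * ((hh r N (k - 1) - hh r N k) / F))"
  have pt: "c S i j * (phi (tgt S i j) - phi S) =
      (if i \<in> S then (if j \<notin> S then A i j else 0) else (if j \<in> S then B i j else 0))" for i j
  proof (cases "i \<in> S"; cases "j \<in> S")
    assume "i \<in> S" "j \<in> S" then show ?thesis by (simp add: tgt_def insert_absorb)
  next
    assume "i \<in> S" "j \<notin> S" then show ?thesis
      by (simp add: tgt_def A_def coef_def phi_def k_def N_def F_def field_simps)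
  next
    assume "i \<notin> S" "j \<in> S" then show ?thesis
      by (simp add: tgt_def B_def coef_def phi_def k_def N_def F_def field_simps)
  next
    assume "i \<notin> S" "j \<notin> S" then show ?thesis by (simp add: tgt_def)
  qed
  have "(\<Sum>i\<in>UNIV. \<Sum>j\<in>UNIV. c S i j * (phi (tgt S i j) - phi S)) =
     (\<Sum>i\<in>UNIV. if i \<in> S then (\<Sum>j\<in>UNIV - S. A i j) else (\<Sum>j\<in>S. B i j))"
  proof (rule sum.cong[OF refl])
    fix i
    show "(\<Sum>j\<in>UNIV. c S i j * (phi (tgt S i j) - phi S)) =
      (if i \<in> S then (\<Sum>j\<in>UNIV - S. A i j) else (\<Sum>j\<in>S. B i j))"
      unfolding pt by (cases "i \<in> S") (simp_all add: sum_if_notin sum_if_in)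
  qed
  also have "\<dots> = (\<Sum>i\<in>S. \<Sum>j\<in>UNIV - S. A i j) + (\<Sum>i\<in>UNIV - S. \<Sum>j\<in>S. B i j)"
    by (simp add: sum.If_cases Compl_eq_Diff_UNIV Int_commute)
  also have "\<dots> = (\<Sum>i\<in>S. \<Sum>j\<in>UNIV - S. WM i j) * (r * (hh r N (Suc k) - hh r N k) / F)
       + (\<Sum>i\<in>UNIV - S. \<Sum>j\<in>S. WR i j) * ((hh r N (k - 1) - hh r N k) / F)"
    unfolding A_def B_def by (simp only: sum_distrib_right)
  also have "\<dots> = (\<Sum>i\<in>UNIV - S. \<Sum>j\<in>S. WR i j) * ((r * (hh r N (Suc k) - hh r N k) + (hh r N (k - 1) - hh r N k)) / F)"
    by (simp add: cut add_divide_distrib distrib_left)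
  also have "\<dots> = 0"
  proof (cases "S = {}")
    case True then show ?thesis by simp
  next
    case False
    then obtain m where m: "k = Suc m" unfolding k_def
      by (metis card_0_eq finite not0_implies_Suc)
    show ?thesis using hh_rec[of r N m] rpos Npos unfolding m N_def by simp
  qed
  finally show ?thesis using dev_sum[of S phi] by simp
qed

lemma E_phi: "(\<Sum>T\<in>UNIV. Pt t S T * phi T) = phi S"
proof (induction t arbitrary: S)
  case 0 then show ?case by (rule steps0_sum)
next
  case (Suc t) then show ?case by (simp only: steps_sum Suc.IH harmonic)
qed

definition V :: "'v set \<Rightarrow> real" where
  "V S = (\<Sum>U\<in>UNIV. P S U * (phi U - phi S)^2)"

lemma V_nn: "V S \<ge> 0"
  unfolding V_def by (intro sum_nonneg mult_nonneg_nonneg P_nn) simp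

lemma V_pos: assumes "S \<noteq> {}" "S \<noteq> UNIV" shows "V S > 0"
proof -
  obtain i j where ij: "i \<in> S" "j \<notin> S" "WM i j > 0" using conn[OF assms] by blast
  have eq: "V S = (\<Sum>i\<in>UNIV. \<Sum>j\<in>UNIV. c S i j * (phi (tgt S i j) - phi S)^2)"
    unfolding V_def by (rule step_sum)
  have cpos: "c S i j > 0" using ij Fpos[of S] rpos by (simp add: coef_def)
  have "card (insert j S) = Suc (card S)" using ij by simp
  then have "phi (tgt S i j) - phi S \<noteq> 0" using ij hh_inc[of r "card (UNIV::'v set)" "card S"] rpos Npos
    by (simp add: tgt_def phi_def)
  then have t: "c S i j * (phi (tgt S i j) - phi S)^2 > 0" using cpos by simp
  have nn: "\<And>i j. c S i j * (phi (tgt S i j) - phi S)^2 \<ge> 0" using coef_nn by simp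
  have "c S i j * (phi (tgt S i j) - phi S)^2 \<le> (\<Sum>j\<in>UNIV. c S i j * (phi (tgt S i j) - phi S)^2)"
    by (rule member_le_sum) (auto simp: nn)
  also have "\<dots> \<le> (\<Sum>i\<in>UNIV. \<Sum>j\<in>UNIV. c S i j * (phi (tgt S i j) - phi S)^2)"
    by (rule member_le_sum) (auto simp: nn intro: sum_nonneg)
  finally show ?thesis using t eq by simp
qed


lemma phi_bounds: "0 \<le> phi S \<and> phi S \<le> 1"
  unfolding phi_def using hh_bounds[of r "card (UNIV::'v set)" "card S"] rpos Npos card_le by simp

lemma phi_empty: "phi {} = 0" by (simp add: phi_def hh_0)
lemma phi_univ: "phi UNIV = 1" using hh_N[OF rpos Npos] by (simp add: phi_def)

definition g :: "'v set \<Rightarrow> real" where "g S = phi S - (phi S)^2"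

lemma g_nn: "g S \<ge> 0"
proof -
  have "g S = phi S * (1 - phi S)" by (simp add: g_def power2_eq_square algebra_simps)
  then show ?thesis using phi_bounds[of S] by simp
qed

lemma Pg: "(\<Sum>U\<in>UNIV. P S U * g U) = g S - V S"
proof -
  have "V S = (\<Sum>U\<in>UNIV. P S U * (phi U)^2 - (2 * phi S) * (P S U * phi U) + (phi S)^2 * P S U)"
    unfolding V_def by (rule sum.cong[OF refl]) (simp add: power2_eq_square algebra_simps)
  also have "\<dots> = (\<Sum>U\<in>UNIV. P S U * (phi U)^2) - (2 * phi S) * (\<Sum>U\<in>UNIV. P S U * phi U) + (phi S)^2 * (\<Sum>U\<in>UNIV. P S U)"
    by (simp add: sum.distrib sum_subtractf sum_distrib_left)
  finally have v: "V S = (\<Sum>U\<in>UNIV. P S U * (phi U)^2) - (phi S)^2"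
    using harmonic[of S] P_sum[of S] by (simp add: power2_eq_square)
  have "(\<Sum>U\<in>UNIV. P S U * g U) = (\<Sum>U\<in>UNIV. P S U * phi U) - (\<Sum>U\<in>UNIV. P S U * (phi U)^2)"
    by (simp add: g_def right_diff_distrib sum_subtractf)
  then show ?thesis using v harmonic[of S] by (simp add: g_def)
qed

definition ind :: "'v set \<Rightarrow> real" where "ind S = (if S \<noteq> {} \<and> S \<noteq> UNIV then 1 else 0)"

definition eps :: real where "eps = Min (V ` {S. S \<noteq> {} \<and> S \<noteq> UNIV})"

lemma eps_pos: "eps > 0"
proof -
  obtain x :: 'v where True by simp
  have "{x} \<noteq> (UNIV::'v set)" 
  proof
    assume a: "{x} = (UNIV::'v set)"
    have "card (UNIV::'v set) = card {x}" by (simp only: a)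
    then have "card (UNIV::'v set) = 1" by simp
    then show False using n2 by simp
  qed
  then have ne: "{S. S \<noteq> {} \<and> S \<noteq> (UNIV::'v set)} \<noteq> {}" by blast
  show ?thesis unfolding eps_def using ne V_pos by (simp add: Min_gr_iff)
qed

lemma V_ge: "V S \<ge> eps * ind S"
proof (cases "S \<noteq> {} \<and> S \<noteq> UNIV")
  case True
  then have "eps \<le> V S" unfolding eps_def by (intro Min_le) auto
  then show ?thesis using True by (simp add: ind_def)
next
  case False then show ?thesis using V_nn[of S] by (auto simp: ind_def)
qed

lemma lyap:
  "(\<Sum>T\<in>UNIV. Pt t S T * g T) + eps * (\<Sum>k<t. \<Sum>T\<in>UNIV. Pt k S T * ind T) \<le> g S"
proof (induction t arbitrary: S)
  case 0 then show ?case by (simp only: steps0_sum lessThan_0 sum.empty)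
next
  case (Suc t)
  have "(\<Sum>T\<in>UNIV. Pt (Suc t) S T * g T) + eps * (\<Sum>k<Suc t. \<Sum>T\<in>UNIV. Pt k S T * ind T)
     = (\<Sum>U\<in>UNIV. P S U * (\<Sum>T\<in>UNIV. Pt t U T * g T))
       + eps * (ind S + (\<Sum>k<t. \<Sum>U\<in>UNIV. P S U * (\<Sum>T\<in>UNIV. Pt k U T * ind T)))"
    by (simp only: sum.lessThan_Suc_shift steps_sum steps0_sum)
  also have "\<dots> = (\<Sum>U\<in>UNIV. P S U * ((\<Sum>T\<in>UNIV. Pt t U T * g T) + eps * (\<Sum>k<t. \<Sum>T\<in>UNIV. Pt k U T * ind T)))
       + eps * ind S"
  proof -
    have "(\<Sum>k<t. \<Sum>U\<in>UNIV. P S U * (\<Sum>T\<in>UNIV. Pt k U T * ind T)) =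
          (\<Sum>U\<in>UNIV. P S U * (\<Sum>k<t. \<Sum>T\<in>UNIV. Pt k U T * ind T))"
      by (simp add: sum_distrib_left sum.swap[of _ "{..<t}" UNIV])
    then show ?thesis by (simp add: distrib_left sum.distrib sum_distrib_left algebra_simps)
  qed
  also have "\<dots> \<le> (\<Sum>U\<in>UNIV. P S U * g U) + eps * ind S"
    using Suc.IH by (intro add_right_mono sum_mono mult_left_mono P_nn) auto
  also have "\<dots> \<le> g S" using Pg[of S] V_ge[of S] by simp
  finally show ?case .
qed

lemma tau_nn: "(\<Sum>T\<in>UNIV. Pt k S T * ind T) \<ge> 0"
  by (intro sum_nonneg mult_nonneg_nonneg Pt_nn) (simp add: ind_def)

lemma tau_lim: "(\<lambda>k. \<Sum>T\<in>UNIV. Pt k S T * ind T) \<longlonglongrightarrow> 0"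
proof -
  have b: "(\<Sum>k<t. \<Sum>T\<in>UNIV. Pt k S T * ind T) \<le> g S / eps" for t
  proof -
    have "(\<Sum>T\<in>UNIV. Pt t S T * g T) \<ge> 0" by (intro sum_nonneg mult_nonneg_nonneg Pt_nn g_nn)
    then have "eps * (\<Sum>k<t. \<Sum>T\<in>UNIV. Pt k S T * ind T) \<le> g S" using lyap[of t S] by linarith
    then show ?thesis using eps_pos by (simp add: field_simps)
  qed
  have "summable (\<lambda>k. \<Sum>T\<in>UNIV. Pt k S T * ind T)"
  proof (rule bounded_imp_summable)
    show "\<And>n. 0 \<le> (\<Sum>T\<in>UNIV. Pt n S T * ind T)" by (rule tau_nn)
    show "\<And>n. (\<Sum>k\<le>n. \<Sum>T\<in>UNIV. Pt k S T * ind T) \<le> g S / eps"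
    proof -
      fix n
      have "(\<Sum>k\<le>n. \<Sum>T\<in>UNIV. Pt k S T * ind T) = (\<Sum>k<Suc n. \<Sum>T\<in>UNIV. Pt k S T * ind T)"
        by (simp only: lessThan_Suc_atMost)
      then show "(\<Sum>k\<le>n. \<Sum>T\<in>UNIV. Pt k S T * ind T) \<le> g S / eps" using b[of "Suc n"] by simp
    qed
  qed
  then show ?thesis by (rule summable_LIMSEQ_zero)
qed

lemma fix_lim: "(\<lambda>t. Pt t S UNIV) \<longlonglongrightarrow> phi S"
proof (rule tendsto_sandwich)
  show "\<forall>\<^sub>F t in sequentially. phi S - (\<Sum>T\<in>UNIV. Pt t S T * ind T) \<le> Pt t S UNIV"
  proof (rule always_eventually, rule allI)
    fix t
    have "phi S = (\<Sum>T\<in>UNIV. Pt t S T * phi T)" using E_phi by simp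
    also have "\<dots> \<le> (\<Sum>T\<in>UNIV. Pt t S T * (ind T + (if T = UNIV then 1 else 0)))"
    proof (intro sum_mono mult_left_mono Pt_nn)
      fix T :: "'v set"
      show "phi T \<le> ind T + (if T = UNIV then 1 else 0)"
        using phi_bounds[of T] phi_empty phi_univ by (auto simp: ind_def)
    qed
    also have "\<dots> = (\<Sum>T\<in>UNIV. Pt t S T * ind T) + (\<Sum>T\<in>UNIV. Pt t S T * (if T = UNIV then 1 else 0))"
      by (simp only: distrib_left sum.distrib)
    also have "\<dots> = (\<Sum>T\<in>UNIV. Pt t S T * ind T) + Pt t S UNIV"
    proof -
      have "(\<Sum>T\<in>UNIV. Pt t S T * (if T = UNIV then 1 else 0)) = (\<Sum>T\<in>UNIV. (if T = UNIV then Pt t S T else 0))"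
        by (rule sum.cong) auto
      then show ?thesis by simp
    qed
    finally show "phi S - (\<Sum>T\<in>UNIV. Pt t S T * ind T) \<le> Pt t S UNIV" by simp
  qed
  show "\<forall>\<^sub>F t in sequentially. Pt t S UNIV \<le> phi S"
  proof (rule always_eventually, rule allI)
    fix t
    have "Pt t S UNIV * phi UNIV \<le> (\<Sum>T\<in>UNIV. Pt t S T * phi T)"
      by (rule member_le_sum) (auto intro: mult_nonneg_nonneg Pt_nn simp: phi_bounds)
    then show "Pt t S UNIV \<le> phi S" using E_phi[of t S] phi_univ by simp
  qed
  show "(\<lambda>t. phi S - (\<Sum>T\<in>UNIV. Pt t S T * ind T)) \<longlonglongrightarrow> phi S"
    using tendsto_diff[OF tendsto_const tau_lim] by simp
  show "(\<lambda>t. phi S) \<longlonglongrightarrow> phi S" by simp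
qed

lemma main: "fixation_prob WR WM r = f_Moran (card (UNIV :: 'v set)) r"
proof -
  have nz: "real (card (UNIV::'v set)) \<noteq> 0" using Npos by simp
  have "\<And>u. fixation_from WR WM r {u} = phi {u}"
    unfolding fixation_from_def using fix_lim by (rule limI)
  then have "fixation_prob WR WM r = hh r (card (UNIV::'v set)) 1"
    using nz by (simp add: fixation_prob_def phi_def)
  then show ?thesis using hh_1[OF rpos Npos] by simp
qed

end

theorem theorem2:
  fixes WR WM :: "'v::finite \<Rightarrow> 'v \<Rightarrow> real" and r :: real
  assumes "weighted_sc_graph WR" and "weighted_sc_graph WM"
    and "\<forall>i. (\<Sum>j\<in>UNIV - {i}. WR j i) = 1"
    and "\<forall>i. (\<Sum>j\<in>UNIV - {i}. WM j i) = 1"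
    and "\<forall>i j. WR i j + WR j i = WM i j + WM j i"
    and "r > 0"
  shows "fixation_prob WR WM r = f_Moran (card (UNIV :: 'v set)) r"
proof -
  note a = assms
  have nnR: "\<forall>i j. WR i j \<ge> 0" and rowR: "\<forall>i. (\<Sum>j\<in>UNIV. WR i j) = 1"
    using a(1) unfolding weighted_sc_graph_def by auto
  have nnM: "\<forall>i j. WM i j \<ge> 0" and rowM: "\<forall>i. (\<Sum>j\<in>UNIV. WM i j) = 1"
    and reach: "\<forall>i j. (i, j) \<in> (edges_of WM)\<^sup>*"
    using a(2) unfolding weighted_sc_graph_def by auto
  have cR: "\<forall>i. (\<Sum>j\<in>UNIV. WR j i) = 1" using col_sum[OF nnR rowR a(3)] by simp
  have cM: "\<forall>i. (\<Sum>j\<in>UNIV. WM j i) = 1" using col_sum[OF nnM rowM a(4)] by simp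
  have cut: "\<And>S. (\<Sum>i\<in>S. \<Sum>j\<in>UNIV - S. WM i j) = (\<Sum>i\<in>UNIV - S. \<Sum>j\<in>S. WR i j)"
    using cut_mixed[OF cut_balance[OF rowR cR] cut_balance[OF rowM cM] a(5)] by simp
  have conn: "\<exists>i\<in>S. \<exists>j. j \<notin> S \<and> WM i j > 0" if ne: "S \<noteq> {}" and nu: "S \<noteq> UNIV" for S
  proof -
    obtain s where "s \<in> S" using ne by blast
    moreover obtain t where "t \<notin> S" using nu by blast
    ultimately show ?thesis using conn_cut[OF reach[rule_format, of s t]] by blast
  qed
  have n2: "card (UNIV::'v set) \<ge> 2"
  proof (rule ccontr)
    assume "\<not> card (UNIV::'v set) \<ge> 2"
    moreover have "card (UNIV::'v set) \<noteq> 0" by simp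
    ultimately have "card (UNIV::'v set) = 1" by linarith
    then obtain x :: 'v where x: "UNIV = {x}" by (metis card_1_singletonE)
    have "(\<Sum>j\<in>UNIV - {x}. WR j x) = 0" using x by simp
    then show False using a(3) by simp
  qed
  interpret tg WR WM r
    using nnR nnM rowR rowM cut conn a(6) n2 by unfold_locales auto
  show ?thesis by (rule main)
qed

end
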